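(* Let $r\geq1$ be odd, $m\geq 3$, $n=(r+1)m$, let $u$ be an integer with $\gcd(u,2^m-1)=1$, let $\alpha$ be a primitive element of $\mathbb{F}_{2^{rm}}$, let $0\leq s\leq 2^{rm}-2$, let $\Delta_s=\{\alpha^i\mid s\leq i\leq s+2^{rm-1}-1\}$, and let $f\colon\mathbb{F}_{2^{rm}}\times\mathbb{F}_{2^m}\to\mathbb{F}_2$ be the Boolean function with $\mathrm{supp}(f)=\{(\gamma y^u,y)\mid y\in\mathbb{F}_{2^m}^*,\ \gamma\in\Delta_s\}$. Then $f$ is bent if and only if $r=1$ and $u\equiv 2^t\pmod{2^m-1}$ for some non-negative integer $t$.
   Context: $\mathbb{F}_{2^{rm}}\times\mathbb{F}_{2^m}$ is viewed as an $n$-dimensional $\mathbb{F}_2$-vector space ($\mathbb{F}_{2^m}\subseteq\mathbb{F}_{2^{rm}}$). An $n$-variable Boolean function $f$ ($n$ even) is bent if $|W_f(a,b)|=2^{n/2}$ for all $(a,b)\in\mathbb{F}_{2^{rm}}\times\mathbb{F}_{2^m}$, where $W_f(a,b)=\sum_{(x,y)}(-1)^{f(x,y)+\mathrm{tr}^{rm}_1(ax)+\mathrm{tr}^m_1(by)}$ and $\mathrm{tr}^k_1$ is the absolute trace of $\mathbb{F}_{2^k}$. *)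

theory Defs
  imports "HOL-Computational_Algebra.Computational_Algebra" "HOL-Number_Theory.Cong"
begin

text \<open>The ambient field F_{2^{rm}} is modelled as a finite field type 'a with
  CARD('a) = 2^(r*m).  The subfield F_{2^m} is the set of fixed points of
  x \<mapsto> x^(2^m).\<close>

definition subfield_pow2 :: "nat \<Rightarrow> 'a::field set" where
  "subfield_pow2 m = {x. x ^ (2 ^ m) = x}"

definition abs_trace :: "nat \<Rightarrow> 'a::field \<Rightarrow> 'a" where
  "abs_trace k x = (\<Sum>i<k. x ^ (2 ^ i))"

definition sgn_f2 :: "'a::field \<Rightarrow> int" where
  "sgn_f2 z = (if z = 0 then 1 else -1)"

definition sgn_bool :: "bool \<Rightarrow> int" where
  "sgn_bool b = (if b then -1 else 1)"

definition walsh :: "nat \<Rightarrow> nat \<Rightarrow> ('a::{field,finite} \<times> 'a \<Rightarrow> bool) \<Rightarrow> 'a \<Rightarrow> 'a \<Rightarrow> int" where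
  "walsh k m f a b = (\<Sum>x\<in>(UNIV::'a set). \<Sum>y\<in>subfield_pow2 m.
      sgn_bool (f (x, y)) * sgn_f2 (abs_trace k (a * x)) * sgn_f2 (abs_trace m (b * y)))"

definition is_bent :: "nat \<Rightarrow> nat \<Rightarrow> ('a::{field,finite} \<times> 'a \<Rightarrow> bool) \<Rightarrow> bool" where
  "is_bent k m f \<longleftrightarrow> (\<forall>a b. b \<in> subfield_pow2 m \<longrightarrow>
      \<bar>walsh k m f a b\<bar> = 2 ^ ((k + m) div 2))"

definition primitive_element :: "'a::field \<Rightarrow> bool" where
  "primitive_element \<alpha> \<longleftrightarrow> range (\<lambda>i::nat. \<alpha> ^ i) = UNIV - {0}"

definition Delta :: "'a::field \<Rightarrow> nat \<Rightarrow> nat \<Rightarrow> 'a set" where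
  "Delta \<alpha> s k = {\<alpha> ^ i | i. s \<le> i \<and> i \<le> s + 2 ^ (k - 1) - 1}"

end

theory Submission
  imports Defs
begin

locale ff =
  fixes \<alpha> :: "'a::{field,finite}" and k :: nat
  assumes card: "card (UNIV::'a set) = 2 ^ k" and kpos: "k \<ge> 1" and prim: "primitive_element \<alpha>"
begin

definition N :: nat where "N = 2 ^ k - 1"

lemma two_pow_ge: "(2::nat) ^ k \<ge> 2"
  using power_increasing[OF kpos, of "2::nat"] by simp

lemma N_pos: "N \<ge> 1" unfolding N_def using two_pow_ge by simp

lemma card_nz: "card (UNIV - {0::'a}) = N"
  using card unfolding N_def by (simp add: card_Diff_singleton)

lemma range_alpha: "range (\<lambda>i::nat. \<alpha> ^ i) = UNIV - {0}"
  using prim unfolding primitive_element_def by simp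

lemma alpha_nz [simp]: "\<alpha> \<noteq> 0"
proof
  assume "\<alpha> = 0"
  then have "(0::'a) \<in> range (\<lambda>i::nat. \<alpha> ^ i)" using rangeI[of "\<lambda>i::nat. \<alpha> ^ i" 1] by simp
  then show False using range_alpha by simp
qed

lemma alpha_N: "\<alpha> ^ N = 1"
proof -
  let ?S = "UNIV - {0::'a}"
  have bij: "bij_betw (\<lambda>x. \<alpha> * x) ?S ?S"
    unfolding bij_betw_def inj_on_def
  proof (intro conjI ballI impI)
    show "(\<lambda>x. \<alpha> * x) ` ?S = ?S"
    proof
      show "(\<lambda>x. \<alpha> * x) ` ?S \<subseteq> ?S" using alpha_nz by auto
      show "?S \<subseteq> (\<lambda>x. \<alpha> * x) ` ?S"
      proof
        fix y assume "y \<in> ?S"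
        then have "y = \<alpha> * (y / \<alpha>)" "y / \<alpha> \<in> ?S" using alpha_nz by auto
        then show "y \<in> (\<lambda>x. \<alpha> * x) ` ?S" by blast
      qed
    qed
  qed (use alpha_nz in auto)
  define P where "P = prod (\<lambda>x. x) ?S"
  have "P = prod (\<lambda>x. \<alpha> * x) ?S"
    unfolding P_def using prod.reindex_bij_betw[OF bij, of "\<lambda>x. x"] by simp
  also have "\<dots> = \<alpha> ^ N * P"
    unfolding P_def by (simp add: prod.distrib card_nz)
  finally have eq: "P = \<alpha> ^ N * P" .
  have "P \<noteq> 0" unfolding P_def by simp
  then have "1 * P = \<alpha> ^ N * P \<longleftrightarrow> 1 = \<alpha> ^ N" by (rule mult_right_cancel)
  then show ?thesis using eq by simp
qed

lemma pow_N: "(x::'a) \<noteq> 0 \<Longrightarrow> x ^ N = 1"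
proof -
  assume "x \<noteq> 0"
  then obtain i where "x = \<alpha> ^ i" proof -
    have "x \<in> range (\<lambda>i::nat. \<alpha> ^ i)" using range_alpha \<open>x \<noteq> 0\<close> by simp
    then show ?thesis using that by blast
  qed
  have "(\<alpha> ^ i) ^ N = (\<alpha> ^ N) ^ i"
    by (metis power_mult mult.commute)
  then show ?thesis using \<open>x = \<alpha> ^ i\<close> alpha_N by simp
qed

lemma q_eq: "(2::nat) ^ k = N + 1" unfolding N_def by simp

lemma pow_q: "x ^ (2 ^ k) = (x::'a)"
proof (cases "x = 0")
  case True then show ?thesis by simp
next
  case False then show ?thesis using pow_N[OF False] by (simp add: q_eq)
qed

lemma N_odd: "odd N"
proof -
  have "even ((2::nat) ^ k)" using kpos by simp
  then show ?thesis using q_eq by simp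
qed

lemma char2 [simp]: "(2::'a) = 0"
proof -
  have "(-1::'a) ^ N = 1" by (rule pow_N) simp
  moreover have "(-1::'a) ^ N = -1" using N_odd by simp
  ultimately have "(-1::'a) = 1" by simp
  then have "(1::'a) + 1 = 0" by (metis add.right_inverse)
  then show ?thesis by simp
qed

lemma add_self [simp]: "x + x = (0::'a)"
proof -
  have "x + x = 2 * x" by (simp add: mult_2)
  then show ?thesis by simp
qed

lemma minus_eq [simp]: "- x = (x::'a)"
  using add.inverse_unique[OF add_self[of x]] by simp

lemma frob: "(x + y) ^ (2 ^ i) = x ^ (2 ^ i) + (y::'a) ^ (2 ^ i)"
proof (induction i)
  case 0 then show ?case by simp
next
  case (Suc i)
  have sq: "(a + b) ^ 2 = a ^ 2 + (b::'a) ^ 2" for a b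
  proof -
    have "(a + b) ^ 2 = a ^ 2 + b ^ 2 + (a * b + a * b)" by (simp add: power2_eq_square algebra_simps)
    then show ?thesis by simp
  qed
  have "(x + y) ^ (2 ^ Suc i) = ((x + y) ^ (2 ^ i)) ^ 2" by (simp add: power_mult[symmetric] mult.commute)
  also have "\<dots> = (x ^ (2 ^ i)) ^ 2 + (y ^ (2 ^ i)) ^ 2" using Suc sq by simp
  also have "\<dots> = x ^ (2 ^ Suc i) + y ^ (2 ^ Suc i)" by (simp add: power_mult[symmetric] mult.commute)
  finally show ?case .
qed


lemma poly_zero_if_all_roots:
  fixes p :: "'a poly"
  assumes "\<And>x. poly p x = 0" and "degree p < 2 ^ k"
  shows "p = 0"
proof (rule ccontr)
  assume "p \<noteq> 0"
  then have "card {x. poly p x = 0} \<le> degree p" by (rule card_poly_roots_bound)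
  moreover have "{x. poly p x = 0} = (UNIV::'a set)" using assms(1) by auto
  ultimately show False using assms(2) card by simp
qed

definition tr :: "'a \<Rightarrow> 'a" where "tr x = abs_trace k x"

definition chi :: "'a \<Rightarrow> int" where "chi x = sgn_f2 (tr x)"

lemma tr_add: "tr (x + y) = tr x + tr y"
  unfolding tr_def abs_trace_def by (simp add: frob sum.distrib)

lemma tr_zero [simp]: "tr 0 = 0"
  unfolding tr_def abs_trace_def by (intro sum.neutral) simp

lemma tr_sq: "tr (x ^ 2) = tr x"
proof -
  obtain k' where k': "k = Suc k'" using kpos by (cases k) auto
  define f where "f i = x ^ (2 ^ i)" for i :: nat
  have "tr (x ^ 2) = (\<Sum>i<k. f (Suc i))"
    unfolding tr_def abs_trace_def f_def by (simp add: power_mult[symmetric] mult.commute)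
  also have "\<dots> = (\<Sum>i<k'. f (Suc i)) + f k" using k' by simp
  also have "f k = f 0" unfolding f_def using pow_q by simp
  also have "(\<Sum>i<k'. f (Suc i)) + f 0 = (\<Sum>i<k. f i)" by (simp only: k' sum.lessThan_Suc_shift add.commute)
  finally show ?thesis unfolding tr_def abs_trace_def f_def by simp
qed

lemma tr_pow2: "tr (x ^ (2 ^ j)) = tr x"
proof (induction j)
  case 0 then show ?case by simp
next
  case (Suc j)
  have "x ^ (2 ^ Suc j) = (x ^ (2 ^ j)) ^ 2" by (simp add: power_mult[symmetric] mult.commute)
  then show ?case using tr_sq Suc by simp
qed

lemma sum_frob: "(sum f A) ^ (2 ^ j) = sum (\<lambda>i. (f i :: 'a) ^ (2 ^ j)) A"
proof (cases "finite A")
  case True then show ?thesis by (induction A rule: finite_induct) (simp_all add: frob)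
next
  case False then show ?thesis by simp
qed

lemma tr_sq2: "(tr x) ^ 2 = tr (x ^ 2)"
proof -
  have "(tr x) ^ (2 ^ 1) = tr (x ^ (2 ^ 1))"
    unfolding tr_def abs_trace_def sum_frob
    by (intro sum.cong) (simp_all add: power_mult[symmetric] mult.commute)
  then show ?thesis by simp
qed

lemma tr_01: "tr x = 0 \<or> tr x = 1"
proof -
  have "tr x * tr x = tr x" using tr_sq[of x] tr_sq2[of x] by (simp add: power2_eq_square)
  then have "tr x * (tr x - 1) = 0" by (simp add: algebra_simps)
  then show ?thesis by simp
qed

lemma tr_nonzero: "\<exists>x. tr x \<noteq> 0"
proof (rule ccontr)
  assume "\<not> ?thesis"
  then have all: "\<And>x. tr x = 0" by simp
  define p :: "'a poly" where "p = (\<Sum>i<k. monom 1 (2 ^ i))"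
  have "poly p x = 0" for x
    using all[of x] unfolding p_def tr_def abs_trace_def by (simp add: poly_sum poly_monom)
  moreover have "degree p < 2 ^ k"
  proof -
    have "degree p \<le> 2 ^ (k - 1)" unfolding p_def
      by (rule degree_sum_le) (auto simp: degree_monom_le intro: order.trans[OF degree_monom_le] power_increasing)
    also have "\<dots> < 2 ^ k" using kpos by simp
    finally show ?thesis .
  qed
  ultimately have "p = 0" by (rule poly_zero_if_all_roots)
  moreover have "coeff p (2 ^ (k - 1)) = 1"
  proof -
    have "coeff p (2 ^ (k - 1)) = (\<Sum>i<k. if 2 ^ i = (2::nat) ^ (k - 1) then 1 else 0)"
      unfolding p_def by (simp add: coeff_sum)
    also have "\<dots> = (\<Sum>i\<in>{k - 1}. 1)"
      by (rule sum.mono_neutral_cong_right) (use kpos in auto)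
    finally show ?thesis by simp
  qed
  ultimately show False by simp
qed

lemma chi_add: "chi (x + y) = chi x * chi y"
  using tr_01[of x] tr_01[of y] unfolding chi_def sgn_f2_def tr_add by auto

lemma chi_zero [simp]: "chi 0 = 1" unfolding chi_def sgn_f2_def by simp

lemma chi_pm: "chi x = 1 \<or> chi x = -1" unfolding chi_def sgn_f2_def by auto

lemma sum_chi_all: "(\<Sum>x\<in>UNIV. chi x) = 0"
proof -
  obtain x0 where x0: "tr x0 \<noteq> 0" using tr_nonzero by blast
  then have c0: "chi x0 = -1" unfolding chi_def sgn_f2_def by simp
  have "(\<Sum>x\<in>UNIV. chi x) = (\<Sum>x\<in>UNIV. chi (x + x0))"
    by (rule sum.reindex_bij_witness[where i="\<lambda>x. x + x0" and j="\<lambda>x. x + x0"]) (auto simp: add.assoc)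
  also have "\<dots> = - (\<Sum>x\<in>UNIV. chi x)" by (simp add: chi_add c0 sum_negf)
  finally show ?thesis by simp
qed

lemma sum_chi_aux: "(\<Sum>x\<in>UNIV. chi (c * x)) = (if c = 0 then 2 ^ k else 0)"
proof (cases "c = 0")
  case True then show ?thesis using card by simp
next
  case False
  have "(\<Sum>x\<in>UNIV. chi (c * x)) = (\<Sum>x\<in>UNIV. chi x)"
    by (rule sum.reindex_bij_witness[where i="\<lambda>x. x / c" and j="\<lambda>x. c * x"]) (use False in auto)
  then show ?thesis using False sum_chi_all by simp
qed


lemma pow_mod_N: "(x::'a) \<noteq> 0 \<Longrightarrow> x ^ n = x ^ (n mod N)"
proof -
  assume "x \<noteq> 0"
  have "x ^ n = x ^ (N * (n div N) + n mod N)" by simp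
  also have "\<dots> = (x ^ N) ^ (n div N) * x ^ (n mod N)" by (simp only: power_add power_mult)
  finally show ?thesis using pow_N[OF \<open>x \<noteq> 0\<close>] by simp
qed

lemma alpha_pow_nz [simp]: "\<alpha> ^ i \<noteq> 0" using alpha_nz by simp

lemma alpha_pow_ne1: assumes "0 < d" "d < N" shows "\<alpha> ^ d \<noteq> 1"
proof
  assume d1: "\<alpha> ^ d = 1"
  have "range (\<lambda>i::nat. \<alpha> ^ i) \<subseteq> (\<lambda>i. \<alpha> ^ i) ` {..<d}"
  proof
    fix y assume "y \<in> range (\<lambda>i::nat. \<alpha> ^ i)"
    then obtain i where y: "y = \<alpha> ^ i" by blast
    have "\<alpha> ^ i = \<alpha> ^ (d * (i div d) + i mod d)" by simp
    also have "\<dots> = (\<alpha> ^ d) ^ (i div d) * \<alpha> ^ (i mod d)" by (simp only: power_add power_mult)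
    also have "\<dots> = \<alpha> ^ (i mod d)" by (simp add: d1)
    finally show "y \<in> (\<lambda>i. \<alpha> ^ i) ` {..<d}" using y assms by auto
  qed
  then have "card (range (\<lambda>i::nat. \<alpha> ^ i)) \<le> card ((\<lambda>i. \<alpha> ^ i) ` {..<d})"
    by (intro card_mono) auto
  also have "\<dots> \<le> d" using card_image_le[of "{..<d}" "\<lambda>i. \<alpha> ^ i"] by simp
  finally show False using range_alpha card_nz assms by simp
qed

lemma alpha_inj: "inj_on (\<lambda>i. \<alpha> ^ i) {a..<a + L}" if "L \<le> N"
proof (rule inj_onI)
  have *: "i = j" if "i \<in> {a..<a+L}" "j \<in> {a..<a+L}" "\<alpha> ^ i = \<alpha> ^ j" "i \<le> j" for i j
  proof (rule ccontr)
    assume "i \<noteq> j"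
    then have "0 < j - i" "j - i < N" using that \<open>L \<le> N\<close> by auto
    moreover have "\<alpha> ^ j = \<alpha> ^ i * \<alpha> ^ (j - i)" using \<open>i \<le> j\<close> by (simp add: power_add[symmetric])
    then have "\<alpha> ^ (j - i) = 1" using that(3) by simp
    ultimately show False using alpha_pow_ne1 by blast
  qed
  fix i j assume "i \<in> {a..<a+L}" "j \<in> {a..<a+L}" "\<alpha> ^ i = \<alpha> ^ j"
  then show "i = j" using *[of i j] *[of j i] by (cases "i \<le> j") auto
qed

lemma alpha_bij: "bij_betw (\<lambda>i. \<alpha> ^ i) {a..<a + N} (UNIV - {0})"
proof -
  have inj: "inj_on (\<lambda>i. \<alpha> ^ i) {a..<a + N}" by (rule alpha_inj) simp
  have "(\<lambda>i. \<alpha> ^ i) ` {a..<a + N} = UNIV - {0}"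
  proof (rule card_subset_eq)
    show "(\<lambda>i. \<alpha> ^ i) ` {a..<a + N} \<subseteq> UNIV - {0}" by auto
    show "card ((\<lambda>i. \<alpha> ^ i) ` {a..<a + N}) = card (UNIV - {0::'a})"
      using card_image[OF inj] card_nz by simp
  qed simp
  then show ?thesis using inj unfolding bij_betw_def by simp
qed

lemma sum_arc: "(\<Sum>i\<in>{a..<a + N}. F (\<alpha> ^ i)) = (\<Sum>c\<in>UNIV - {0}. F c)"
  by (rule sum.reindex_bij_betw[OF alpha_bij])

definition h :: nat where "h = 2 ^ (k - 1)"

lemma h_eq: "2 * h = N + 1" unfolding h_def using q_eq kpos
  by (metis Suc_diff_le diff_Suc_1 power_Suc)

lemma h_le: "h \<le> N" "h \<ge> 1" using h_eq by auto

lemma Delta_eq: "Delta \<alpha> s k = (\<lambda>i. \<alpha> ^ i) ` {s..<s + h}"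
proof -
  have *: "(i \<le> s + 2 ^ (k - 1) - 1) = (i < s + h)" for i
  proof -
    have "(1::nat) \<le> 2 ^ (k - 1)" by simp
    then show ?thesis unfolding h_def by linarith
  qed
  have "{i. s \<le> i \<and> i < s + h} = {s..<s + h}" by auto
  then show ?thesis unfolding Delta_def * by blast
qed

lemma sum_Delta: "(\<Sum>\<gamma>\<in>Delta \<alpha> s k. F \<gamma>) = (\<Sum>i\<in>{s..<s + h}. F (\<alpha> ^ i))"
  unfolding Delta_eq using sum.reindex[OF alpha_inj[OF h_le(1)], of F s] by (simp add: comp_def)

lemma card_Delta: "card (Delta \<alpha> s k) = h"
  using sum_Delta[of "\<lambda>_. 1::nat" s] by simp


lemma abs_trace_zero [simp]: "abs_trace j (0::'a) = 0"
  unfolding abs_trace_def by (intro sum.neutral) simp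

definition Sup :: "nat \<Rightarrow> int \<Rightarrow> nat \<Rightarrow> ('a \<times> 'a) set" where
  "Sup m u s = {(\<gamma> * y powi u, y) | \<gamma> y. y \<in> subfield_pow2 m - {0} \<and> \<gamma> \<in> Delta \<alpha> s k}"

lemma Sup_image: "Sup m u s = (\<lambda>(\<gamma>, y). (\<gamma> * y powi u, y)) ` (Delta \<alpha> s k \<times> (subfield_pow2 m - {0}))"
  unfolding Sup_def by auto

lemma Sup_inj: "inj_on (\<lambda>(\<gamma>, y). (\<gamma> * y powi u, y)) (Delta \<alpha> s k \<times> (subfield_pow2 m - {0::'a}))"
  unfolding inj_on_def by (auto simp: power_int_not_zero)

lemma sum_Sup: "(\<Sum>p\<in>Sup m u s. g p) = (\<Sum>\<gamma>\<in>Delta \<alpha> s k. \<Sum>y\<in>subfield_pow2 m - {0}. g (\<gamma> * y powi u, y))"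
  unfolding Sup_image sum.reindex[OF Sup_inj] sum.cartesian_product by (simp add: comp_def case_prod_beta)

lemma zero_sub [simp]: "(0::'a) \<in> subfield_pow2 m" unfolding subfield_pow2_def by simp

lemma walsh00: "walsh k m (\<lambda>p. p \<in> Sup m u s) 0 0 = 2 ^ k"
proof -
  let ?E = "subfield_pow2 m :: 'a set"
  have finE: "finite ?E" by simp
  have cE: "card ?E \<ge> 1" using card_gt_0_iff[of ?E] zero_sub[of m] by fastforce
  have sub: "Sup m u s \<subseteq> UNIV \<times> ?E" unfolding Sup_def by auto
  have "walsh k m (\<lambda>p. p \<in> Sup m u s) 0 0 = (\<Sum>p\<in>UNIV \<times> ?E. sgn_bool (p \<in> Sup m u s))"
    unfolding walsh_def sum.cartesian_product by (simp add: sgn_f2_def case_prod_beta)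
  also have "\<dots> = (\<Sum>p\<in>UNIV \<times> ?E. 1 - 2 * (if p \<in> Sup m u s then 1 else 0))"
    by (intro sum.cong) (auto simp: sgn_bool_def)
  also have "\<dots> = int (card (UNIV::'a set)) * int (card ?E) - 2 * (\<Sum>p\<in>UNIV \<times> ?E. (if p \<in> Sup m u s then 1 else 0))"
    by (simp add: sum_subtractf sum_distrib_left card_cartesian_product)
  also have "(\<Sum>p\<in>UNIV \<times> ?E. (if p \<in> Sup m u s then 1 else 0)) = (\<Sum>p\<in>(UNIV \<times> ?E) \<inter> Sup m u s. (1::int))"
    by (rule sum.inter_restrict[symmetric]) simp
  also have "(UNIV \<times> ?E) \<inter> Sup m u s = Sup m u s" using sub by blast
  also have "(\<Sum>p\<in>Sup m u s. (1::int)) = int h * (int (card ?E) - 1)"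
    unfolding sum_Sup using cE by (simp add: card_Delta card_Diff_singleton of_nat_diff)
  also have "int (card (UNIV::'a set)) = 2 ^ k" using card by simp
  finally have "walsh k m (\<lambda>p. p \<in> Sup m u s) 0 0 = 2 ^ k * int (card ?E) - 2 * int h * (int (card ?E) - 1)" by simp
  moreover have hh: "2 * int h = 2 ^ k" using h_eq q_eq by (metis of_nat_mult of_nat_numeral of_nat_power)
  moreover have "2 * int h * (int (card ?E) - 1) = 2 ^ k * (int (card ?E) - 1)" using hh by simp
  moreover have "(2::int) ^ k * (int (card ?E) - 1) = 2 ^ k * int (card ?E) - 2 ^ k" by (simp add: algebra_simps)
  ultimately show ?thesis by linarith
qed


lemma sub_UNIV: "subfield_pow2 k = (UNIV::'a set)"
  unfolding subfield_pow2_def using pow_q by auto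

definition w :: "int \<Rightarrow> nat" where "w u = nat (u mod int N)"

lemma powi_w: assumes "(y::'a) \<noteq> 0" shows "y powi u = y ^ w u"
proof -
  have Npos: "int N > 0" using N_pos by simp
  have "u = u mod int N + int N * (u div int N)" by simp
  then have "y powi u = y powi (u mod int N + int N * (u div int N))" by simp
  also have "\<dots> = y powi (u mod int N) * y powi (int N * (u div int N))"
    by (rule power_int_add) (use assms in simp)
  also have "y powi (int N * (u div int N)) = (y powi (int N)) powi (u div int N)"
    by (rule power_int_mult)
  also have "y powi (int N) = 1" using pow_N[OF assms] by simp
  also have "y powi (u mod int N) = y ^ w u"
    unfolding w_def using Npos by (metis power_int_of_nat pos_mod_sign nat_0_le)
  finally show ?thesis by simp
qed

definition S :: "int \<Rightarrow> nat \<Rightarrow> 'a \<Rightarrow> 'a \<Rightarrow> int" where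
  "S u s a b = (\<Sum>\<gamma>\<in>Delta \<alpha> s k. \<Sum>y\<in>UNIV - {0}. chi (a * \<gamma> * y ^ w u + b * y))"

lemma walsh_B: "walsh k k (\<lambda>p. p \<in> Sup k u s) a b
   = (\<Sum>x\<in>UNIV. chi (a * x)) * (\<Sum>y\<in>UNIV. chi (b * y)) - 2 * S u s a b"
proof -
  let ?g = "\<lambda>p::'a\<times>'a. chi (a * fst p) * chi (b * snd p)"
  have "walsh k k (\<lambda>p. p \<in> Sup k u s) a b = (\<Sum>p\<in>UNIV \<times> UNIV. sgn_bool (p \<in> Sup k u s) * ?g p)"
    unfolding walsh_def sum.cartesian_product sub_UNIV by (simp add: chi_def tr_def case_prod_beta mult.assoc)
  also have "\<dots> = (\<Sum>p\<in>UNIV \<times> UNIV. ?g p - 2 * (if p \<in> Sup k u s then ?g p else 0))"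
    by (intro sum.cong) (auto simp: sgn_bool_def)
  also have "\<dots> = (\<Sum>p\<in>UNIV \<times> UNIV. ?g p) - 2 * (\<Sum>p\<in>UNIV \<times> UNIV. (if p \<in> Sup k u s then ?g p else 0))"
    by (simp add: sum_subtractf sum_distrib_left)
  also have "(\<Sum>p\<in>UNIV \<times> UNIV. (if p \<in> Sup k u s then ?g p else 0)) = (\<Sum>p\<in>(UNIV \<times> UNIV) \<inter> Sup k u s. ?g p)"
    by (rule sum.inter_restrict[symmetric]) simp
  also have "(UNIV \<times> UNIV) \<inter> Sup k u s = Sup k u s" by auto
  also have "(\<Sum>p\<in>Sup k u s. ?g p) = S u s a b"
    unfolding sum_Sup S_def sub_UNIV
    by (intro sum.cong refl) (simp add: powi_w chi_add[symmetric] mult.assoc)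
  also have "(\<Sum>p\<in>UNIV \<times> UNIV. ?g p) = (\<Sum>x\<in>UNIV. chi (a * x)) * (\<Sum>y\<in>UNIV. chi (b * y))"
    by (simp add: sum_product sum.cartesian_product case_prod_beta)
  finally show ?thesis .
qed


lemma sum_chi: "(\<Sum>x\<in>UNIV. chi (c * x)) = (if c = 0 then 2 ^ k else 0)"
  "(\<Sum>x\<in>UNIV. chi (x * c)) = (if c = 0 then 2 ^ k else 0)"
  using sum_chi_aux[of c] by (simp_all add: mult.commute)

lemma Nq: "int N = 2 ^ k - 1"
proof -
  have "int (2 ^ k) = int (N + 1)" using q_eq by simp
  then show ?thesis by simp
qed

lemma sum_chi_nz: "(\<Sum>y\<in>UNIV - {0}. chi (c * y)) = (if c = 0 then int N else -1)"
proof -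
  have "(\<Sum>y\<in>UNIV. chi (c * y)) = chi (c * 0) + (\<Sum>y\<in>UNIV - {0}. chi (c * y))"
    by (rule sum.remove) simp_all
  then have r: "(\<Sum>y\<in>UNIV - {0}. chi (c * y)) = (\<Sum>y\<in>UNIV. chi (c * y)) - 1" by simp
  show ?thesis
  proof (cases "c = 0")
    case True
    then have "(\<Sum>y\<in>UNIV. chi (c * y)) = 2 ^ k" using sum_chi_aux[of c] by simp
    then show ?thesis using r True Nq by simp
  next
    case False
    then have "(\<Sum>y\<in>UNIV. chi (c * y)) = 0" using sum_chi_aux[of c] by simp
    then show ?thesis using r False by simp
  qed
qed

lemma hq: "2 * int h = 2 ^ k" using h_eq q_eq by (metis of_nat_mult of_nat_numeral of_nat_power)


lemma walsh_a0: "walsh k k (\<lambda>p. p \<in> Sup k u s) 0 b = 2 ^ k"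
proof -
  have S0: "S u s 0 b = int h * (if b = 0 then int N else -1)"
    unfolding S_def by (simp add: sum_chi_nz card_Delta)
  define Q :: int where "Q = 2 ^ k"
  have hQ: "2 * int h = Q" "int N = Q - 1" using hq Nq unfolding Q_def by auto
  show ?thesis
  proof (cases "b = 0")
    case True
    then have "walsh k k (\<lambda>p. p \<in> Sup k u s) 0 b = Q * Q - (2 * int h) * int N"
      unfolding walsh_B S0 Q_def by (simp add: sum_chi card)
    also have "\<dots> = Q" unfolding hQ by (simp add: algebra_simps)
    finally show ?thesis unfolding Q_def .
  next
    case False
    then have "walsh k k (\<lambda>p. p \<in> Sup k u s) 0 b = 2 * int h"
      unfolding walsh_B S0 by (simp add: sum_chi mult.commute[of b])
    then show ?thesis using hq by simp
  qed
qed

lemma walsh_anz: "a \<noteq> 0 \<Longrightarrow> walsh k k (\<lambda>p. p \<in> Sup k u s) a b = - 2 * S u s a b"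
  unfolding walsh_B by (simp add: sum_chi)

lemma pow_q_iter: "(x::'a) ^ (2 ^ (k * n)) = x"
proof (induction n)
  case 0 then show ?case by simp
next
  case (Suc n)
  have pe: "(2::nat) ^ (k * Suc n) = 2 ^ (k * n) * 2 ^ k"
    by (simp add: power_add[symmetric])
  have "x ^ (2 ^ (k * Suc n)) = (x ^ (2 ^ (k * n))) ^ (2 ^ k)"
    unfolding pe by (rule power_mult)
  then show ?case using Suc pow_q by simp
qed

lemma add_eq0: "((x::'a) + y = 0) = (x = y)"
  using eq_neg_iff_add_eq_0[of x y] by simp

lemma frob_inj: "(x::'a) ^ (2 ^ j) = y ^ (2 ^ j) \<Longrightarrow> x = y"
proof -
  assume "x ^ (2 ^ j) = y ^ (2 ^ j)"
  then have "(x + y) ^ (2 ^ j) = 0" by (simp add: frob)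
  then have "x + y = 0" by simp
  then show "x = y" using add_eq0 by simp
qed

lemma chi_pow2: "chi (x ^ (2 ^ j)) = chi x" unfolding chi_def using tr_pow2 by simp

lemma S_if: assumes "a \<noteq> 0" and cu: "[u = 2 ^ t] (mod int N)"
  shows "\<bar>S u s a b\<bar> = int h"
proof -
  have wu: "w u = 2 ^ t mod N"
  proof -
    have "u mod int N = (2 ^ t) mod int N" using cu unfolding cong_def by simp
    also have "\<dots> = int (2 ^ t mod N)" by (simp add: zmod_int)
    finally show ?thesis unfolding w_def by simp
  qed
  define j where "j = k * t - t"
  have tj: "2 ^ t * 2 ^ j = (2::nat) ^ (k * t)" unfolding j_def power_add[symmetric]
    using kpos by (simp add: mult_le_mono1)
  have key: "chi (a * g * y ^ w u + b * y) = chi (((a * g) ^ (2 ^ j) + b) * y)" if "y \<noteq> 0" for g y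
  proof -
    have yw: "y ^ w u = y ^ (2 ^ t)" unfolding wu by (rule pow_mod_N[OF that, symmetric])
    have e1: "(a * g * y ^ (2 ^ t)) ^ (2 ^ j) = (a * g) ^ (2 ^ j) * y ^ (2 ^ t * 2 ^ j)"
      by (simp only: power_mult_distrib power_mult)
    have e2: "y ^ (2 ^ t * 2 ^ j) = y" unfolding tj by (rule pow_q_iter)
    have "chi (a * g * y ^ w u + b * y) = chi (a * g * y ^ (2 ^ t)) * chi (b * y)"
      unfolding yw by (rule chi_add)
    also have "chi (a * g * y ^ (2 ^ t)) = chi ((a * g * y ^ (2 ^ t)) ^ (2 ^ j))"
      by (rule chi_pow2[symmetric])
    also have "\<dots> = chi ((a * g) ^ (2 ^ j) * y)" unfolding e1 e2 ..
    also have "chi ((a * g) ^ (2 ^ j) * y) * chi (b * y) = chi ((a * g) ^ (2 ^ j) * y + b * y)"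
      by (rule chi_add[symmetric])
    also have "(a * g) ^ (2 ^ j) * y + b * y = ((a * g) ^ (2 ^ j) + b) * y"
      by (simp only: distrib_right)
    finally show ?thesis .
  qed
  define P where "P = {g \<in> Delta \<alpha> s k. (a * g) ^ (2 ^ j) = b}"
  have "S u s a b = (\<Sum>g\<in>Delta \<alpha> s k. \<Sum>y\<in>UNIV - {0}. chi (((a * g) ^ (2 ^ j) + b) * y))"
    unfolding S_def by (intro sum.cong refl) (simp add: key)
  also have "\<dots> = (\<Sum>g\<in>Delta \<alpha> s k. (if (a * g) ^ (2 ^ j) = b then int N else -1))"
  proof (intro sum.cong refl)
    fix g
    have "((a * g) ^ (2 ^ j) + b = 0) = ((a * g) ^ (2 ^ j) = b)"
      by (rule add_eq0)
    then show "(\<Sum>y\<in>UNIV - {0}. chi (((a * g) ^ (2 ^ j) + b) * y)) = (if (a * g) ^ (2 ^ j) = b then int N else -1)"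
      using sum_chi_nz by simp
  qed
  also have "\<dots> = (\<Sum>g\<in>Delta \<alpha> s k. (if (a * g) ^ (2 ^ j) = b then 2 ^ k else 0) - 1)"
    using Nq by (intro sum.cong refl) simp
  also have "\<dots> = 2 ^ k * int (card P) - int h"
    by (simp add: sum_subtractf sum.If_cases card_Delta P_def Int_def)
  finally have Seq: "S u s a b = 2 ^ k * int (card P) - int h" .
  have "\<forall>g1\<in>P. \<forall>g2\<in>P. g1 = g2"
  proof (intro ballI)
    fix g1 g2 assume "g1 \<in> P" "g2 \<in> P"
    then have "(a * g1) ^ (2 ^ j) = (a * g2) ^ (2 ^ j)" unfolding P_def by simp
    then have "a * g1 = a * g2" by (rule frob_inj)
    then show "g1 = g2" using assms(1) by simp
  qed
  then have "card P \<le> Suc 0" using card_le_Suc0_iff_eq[of P] by simp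
  then have "card P = 0 \<or> card P = 1" by linarith
  then show ?thesis
  proof
    assume "card P = 0" then show ?thesis using Seq by simp
  next
    assume "card P = 1" then have "S u s a b = 2 * int h - int h" using Seq hq by simp
    then show ?thesis by simp
  qed
qed


lemma N_ge2: "k \<ge> 2 \<Longrightarrow> N \<ge> 2"
proof -
  assume "k \<ge> 2"
  then have "(2::nat) ^ 2 \<le> 2 ^ k" by (rule power_increasing) simp
  then show ?thesis using q_eq by simp
qed

lemma coprime_N_pow2: "coprime N (2 ^ i)"
proof -
  have "coprime N 2" using N_odd by simp
  then show ?thesis by simp
qed

lemma final_alg:
  assumes k2: "k \<ge> 2" and cop: "coprime W N"
    and c0: "\<And>y. y \<noteq> 0 \<Longrightarrow> tr (c0 * y ^ W) = tr y"
  shows "\<exists>j<k. [W * 2 ^ j = 1] (mod N)"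
proof -
  have N2: "N \<ge> 2" using N_ge2[OF k2] .
  obtain v where v: "[W * v = Suc 0] (mod N)" using cong_solve_coprime_nat[OF cop] by blast
  define v' where "v' = v mod N"
  have v': "[W * v' = 1] (mod N)" using v unfolding v'_def cong_def by (simp add: mod_mult_right_eq)
  have v'N: "v' < N" unfolding v'_def using N2 by simp
  have cv: "coprime v' N"
  proof -
    have "coprime (1::nat) N" by simp
    then have "coprime (W * v') N" using cong_imp_coprime[OF cong_sym[OF v']] by blast
    then show ?thesis by simp
  qed
  have v'nz: "v' \<noteq> 0"
  proof
    assume "v' = 0" then have "coprime (0::nat) N" using cv by simp
    then show False using N2 by simp
  qed
  have inv: "(z ^ v') ^ W = z" if "z \<noteq> 0" for z :: 'a
  proof -
    have "(z ^ v') ^ W = z ^ (W * v')" by (simp add: power_mult[symmetric] mult.commute)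
    also have "\<dots> = z ^ ((W * v') mod N)" by (rule pow_mod_N[OF that])
    also have "(W * v') mod N = 1" using v' N2 unfolding cong_def by simp
    finally show ?thesis by simp
  qed
  have trz: "tr (c0 * z) = tr (z ^ v')" if "z \<noteq> 0" for z :: 'a
    using c0[of "z ^ v'"] inv[OF that] that by simp
  define e where "e i = (v' * 2 ^ i) mod N" for i :: nat
  have enz: "e i \<noteq> 0" for i
  proof
    assume "e i = 0"
    then have "N dvd v' * 2 ^ i" unfolding e_def by auto
    then have "N dvd v'" using coprime_N_pow2[of i] by (simp add: coprime_dvd_mult_left_iff)
    then show False using v'nz v'N by (auto dest: dvd_imp_le)
  qed
  have eN: "e i < N" for i unfolding e_def using N2 by simp
  have e0: "e 0 = v'" unfolding e_def using v'N by simp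
  have ei: "e i \<noteq> v'" if "0 < i" "i < k" for i
  proof
    assume "e i = v'"
    then have "[v' * 2 ^ i = v' * 1] (mod N)" unfolding e_def cong_def using v'N by simp
    then have "[2 ^ i = 1] (mod N)" using cong_mult_lcancel_nat[OF cv, of "2 ^ i" 1] by simp
    then have "(2::nat) ^ i mod N = 1" unfolding cong_def using N2 by simp
    moreover have "(2::nat) ^ i < N"
    proof -
      have "(2::nat) ^ i < 2 ^ k - 1"
      proof -
        have "(2::nat) ^ i \<le> 2 ^ (k - 1)" using that by (intro power_increasing) auto
        moreover have "(2::nat) ^ (k - 1) < 2 ^ k - 1"
        proof -
          have "(2::nat) ^ k = 2 * 2 ^ (k - 1)" using that by (metis Suc_diff_1 gr_zeroI less_zeroE power_Suc zero_less_diff)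
          moreover have "(2::nat) ^ (k - 1) \<ge> 2" using k2 by (metis One_nat_def Suc_1 diff_le_mono power_increasing power_one_right diff_Suc_1 zero_less_numeral linorder_not_le not_less_eq_eq)
          ultimately show ?thesis by simp
        qed
        ultimately show ?thesis by (rule le_less_trans)
      qed
      then show ?thesis unfolding N_def .
    qed
    ultimately have "(2::nat) ^ i = 1" by simp
    then show False using that by simp
  qed
  define p :: "'a poly" where "p = (\<Sum>i<k. monom (c0 ^ (2 ^ i)) (2 ^ i)) + (\<Sum>i<k. monom 1 (e i))"
  have pz: "poly p z = tr (c0 * z) + tr (z ^ v')" if "z \<noteq> 0" for z
  proof -
    have "tr (z ^ v') = (\<Sum>i<k. z ^ e i)"
      unfolding tr_def abs_trace_def e_def
    proof (intro sum.cong refl)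
      fix i show "(z ^ v') ^ 2 ^ i = z ^ (v' * 2 ^ i mod N)"
        using pow_mod_N[OF that, of "v' * 2 ^ i"] by (simp add: power_mult)
    qed
    moreover have "tr (c0 * z) = (\<Sum>i<k. c0 ^ (2 ^ i) * z ^ (2 ^ i))"
      unfolding tr_def abs_trace_def by (simp add: power_mult_distrib)
    ultimately show ?thesis unfolding p_def by (simp add: poly_sum poly_monom)
  qed
  have "poly p z = 0" for z
  proof (cases "z = 0")
    case True
    have "(\<Sum>i<k. c0 ^ 2 ^ i * (0::'a) ^ 2 ^ i) = 0" by (intro sum.neutral) simp
    moreover have "(\<Sum>i<k. (0::'a) ^ e i) = 0" using enz by (intro sum.neutral) simp
    ultimately show ?thesis unfolding p_def True by (simp add: poly_sum poly_monom)
  next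
    case False
    then show ?thesis using pz trz add_self by simp
  qed
  moreover have "degree p < 2 ^ k"
  proof -
    have "degree p \<le> N"
      unfolding p_def
    proof (rule order.trans[OF degree_add_le_max], rule max.boundedI)
      show "degree (\<Sum>i<k. monom (c0 ^ 2 ^ i) (2 ^ i)) \<le> N"
      proof (rule degree_sum_le)
        fix i assume "i \<in> {..<k}"
        then have "(2::nat) ^ i \<le> 2 ^ (k - 1)" by (intro power_increasing) auto
        also have "\<dots> \<le> N" using h_le(1) unfolding h_def .
        finally show "degree (monom (c0 ^ 2 ^ i) (2 ^ i)) \<le> N" using degree_monom_le order.trans by blast
      qed simp
      show "degree (\<Sum>i<k. monom (1::'a) (e i)) \<le> N"
        by (rule degree_sum_le) (auto intro: order.trans[OF degree_monom_le] less_imp_le eN)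
    qed
    then show ?thesis using q_eq by simp
  qed
  ultimately have p0: "p = 0" by (rule poly_zero_if_all_roots)
  show ?thesis
  proof (rule ccontr)
    assume nj: "\<not> ?thesis"
    have no2: "2 ^ i \<noteq> v'" if "i < k" for i
    proof
      assume "2 ^ i = v'"
      then have "[W * 2 ^ i = 1] (mod N)" using v' by simp
      then show False using nj that by blast
    qed
    have "coeff p v' = (\<Sum>i<k. if 2 ^ i = v' then c0 ^ 2 ^ i else 0) + (\<Sum>i<k. if e i = v' then 1 else 0)"
      unfolding p_def by (simp add: coeff_sum)
    also have "(\<Sum>i<k. if 2 ^ i = v' then c0 ^ 2 ^ i else 0) = 0"
      using no2 by (intro sum.neutral) auto
    also have "(\<Sum>i<k. if e i = v' then (1::'a) else 0) = (\<Sum>i<k. if i = 0 then 1 else 0)"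
      by (intro sum.cong refl) (use e0 ei in auto)
    also have "\<dots> = 1" using kpos by simp
    finally have "coeff p v' = 1" by simp
    then show False using p0 by simp
  qed
qed


definition K :: "int \<Rightarrow> 'a \<Rightarrow> int" where
  "K u c = (\<Sum>y\<in>UNIV - {0}. chi (c * y ^ w u + y))"

definition A :: "int \<Rightarrow> nat \<Rightarrow> int" where
  "A u d = (\<Sum>l\<in>{d..<d + h}. K u (\<alpha> ^ l))"

lemma S_A: "S u s (\<alpha> ^ d) 1 = A u (s + d)"
proof -
  have "S u s (\<alpha> ^ d) 1 = (\<Sum>g\<in>Delta \<alpha> s k. K u (\<alpha> ^ d * g))"
    unfolding S_def K_def by simp
  also have "\<dots> = (\<Sum>i\<in>{s..<s + h}. K u (\<alpha> ^ (i + d)))"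
    unfolding sum_Delta by (simp add: power_add mult.commute)
  also have "\<dots> = (\<Sum>l\<in>{s + d..<s + h + d}. K u (\<alpha> ^ l))"
    by (rule sum.shift_bounds_nat_ivl[symmetric])
  also have "{s + d..<s + h + d} = {s + d..<s + d + h}" by (simp add: ac_simps)
  finally show ?thesis unfolding A_def .
qed

lemma A_pair: "A u d + A u (d + h) = K u (\<alpha> ^ d) + (\<Sum>c\<in>UNIV - {0}. K u c)"
proof -
  have "A u d + A u (d + h) = (\<Sum>l\<in>{d..<d + h + h}. K u (\<alpha> ^ l))"
    unfolding A_def by (rule sum.atLeastLessThan_concat) simp_all
  also have "d + h + h = Suc d + N" using h_eq by simp
  also have "(\<Sum>l\<in>{d..<Suc d + N}. K u (\<alpha> ^ l)) = K u (\<alpha> ^ d) + (\<Sum>l\<in>{Suc d..<Suc d + N}. K u (\<alpha> ^ l))"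
    by (rule sum.atLeast_Suc_lessThan) simp
  also have "(\<Sum>l\<in>{Suc d..<Suc d + N}. K u (\<alpha> ^ l)) = (\<Sum>c\<in>UNIV - {0}. K u c)"
    by (rule sum_arc)
  finally show ?thesis .
qed

lemma sum_K: "(\<Sum>c\<in>UNIV - {0}. K u c) = 1"
proof -
  have "(\<Sum>c\<in>UNIV - {0}. K u c) = (\<Sum>y\<in>UNIV - {0}. \<Sum>c\<in>UNIV - {0}. chi (c * y ^ w u + y))"
    unfolding K_def by (rule sum.swap)
  also have "\<dots> = (\<Sum>y\<in>UNIV - {0}. chi y * (\<Sum>c\<in>UNIV - {0}. chi (y ^ w u * c)))"
    by (intro sum.cong refl) (simp add: chi_add sum_distrib_left mult.commute)
  also have "\<dots> = (\<Sum>y\<in>UNIV - {0}. - chi (1 * y))"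
    by (intro sum.cong refl) (simp add: sum_chi_nz)
  also have "\<dots> = 1" by (simp only: sum_negf sum_chi_nz) simp
  finally show ?thesis .
qed

lemma exists_c0:
  assumes sN: "s < N" and bent: "\<And>a. a \<noteq> 0 \<Longrightarrow> \<bar>S u s a 1\<bar> = int h"
  shows "\<exists>c0. \<forall>y. y \<noteq> 0 \<longrightarrow> tr (c0 * y ^ w u) = tr y"
proof -
  have Aabs: "\<bar>A u d\<bar> = int h" if "d \<ge> s" for d
  proof -
    have "A u d = S u s (\<alpha> ^ (d - s)) 1" using S_A[of u s "d - s"] that by simp
    then show ?thesis using bent[of "\<alpha> ^ (d - s)"] by simp
  qed
  have Kc: "K u c = int N \<or> K u c \<le> -1" if "c \<noteq> 0" for c
  proof -
    have "c \<in> range (\<lambda>i::nat. \<alpha> ^ i)" using range_alpha that by simp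
    then obtain j where cj: "c = \<alpha> ^ j" by blast
    have "\<alpha> ^ (j + N) = c" using cj alpha_N by (simp add: power_add)
    then have eq: "A u (j + N) + A u (j + N + h) = K u c + 1" using A_pair[of u "j + N"] sum_K by simp
    have "\<bar>A u (j + N)\<bar> = int h" "\<bar>A u (j + N + h)\<bar> = int h" using Aabs sN by auto
    moreover have "2 * int h = int N + 1" using hq Nq by simp
    ultimately have "A u (j + N) = int h \<or> A u (j + N) = - int h" "A u (j + N + h) = int h \<or> A u (j + N + h) = - int h"
      by linarith+
    then show ?thesis using eq \<open>2 * int h = int N + 1\<close> by linarith
  qed
  have "\<exists>c0. c0 \<noteq> 0 \<and> K u c0 = int N"
  proof (rule ccontr)
    assume "\<not> ?thesis"
    then have "K u c \<le> -1" if "c \<in> UNIV - {0}" for c using Kc that by auto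
    then have "(\<Sum>c\<in>UNIV - {0}. K u c) \<le> (\<Sum>c\<in>UNIV - {0::'a}. -1)" by (intro sum_mono) auto
    also have "\<dots> = - int N" using card_nz by simp
    finally show False using sum_K N_pos by simp
  qed
  then obtain c0 where c0: "c0 \<noteq> 0" "K u c0 = int N" by blast
  have eq0: "(\<Sum>y\<in>UNIV - {0}. 1 - chi (c0 * y ^ w u + y)) = 0"
    using c0(2) card_nz unfolding K_def by (simp add: sum_subtractf)
  have nonneg: "0 \<le> 1 - chi (c0 * y ^ w u + y)" for y using chi_pm[of "c0 * y ^ w u + y"] by auto
  have iff: "(\<Sum>y\<in>UNIV - {0}. 1 - chi (c0 * y ^ w u + y)) = 0 \<longleftrightarrow> (\<forall>y\<in>UNIV - {0}. 1 - chi (c0 * y ^ w u + y) = 0)"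
    by (rule sum_nonneg_eq_0_iff) (use nonneg in simp_all)
  have "tr (c0 * y ^ w u) = tr y" if "y \<noteq> 0" for y
  proof -
    have "chi (c0 * y ^ w u + y) = 1" using iff eq0 that by auto
    then have "tr (c0 * y ^ w u + y) = 0" unfolding chi_def sgn_f2_def by (simp split: if_splits)
    then have "tr (c0 * y ^ w u) + tr y = 0" by (simp only: tr_add)
    then show ?thesis by (simp only: add_eq0)
  qed
  then show ?thesis by blast
qed

end


lemma case_r1:
  fixes \<alpha> :: "'a::{field,finite}" and m s :: nat and u :: int
  assumes m3: "m \<ge> 3" and cd: "card (UNIV :: 'a set) = 2 ^ m"
    and cop: "coprime u (2 ^ m - 1)" and pr: "primitive_element \<alpha>"
    and sle: "s \<le> 2 ^ m - 2"
  shows "is_bent m m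
           (\<lambda>p. p \<in> {(\<gamma> * y powi u, y) | \<gamma> y.
                        y \<in> subfield_pow2 m - {0} \<and> \<gamma> \<in> Delta \<alpha> s m})
         \<longleftrightarrow> (\<exists>t::nat. [u = 2 ^ t] (mod (2 ^ m - 1)))"
proof -
  interpret F: ff \<alpha> m using cd pr m3 by unfold_locales auto
  have setA: "{(\<gamma> * y powi u, y) | \<gamma> y. y \<in> subfield_pow2 m - {0} \<and> \<gamma> \<in> Delta \<alpha> s m} = F.Sup m u s"
    unfolding F.Sup_def ..
  have NN: "(2::int) ^ m - 1 = int F.N" using F.Nq by simp
  have hh: "(2::int) ^ ((m + m) div 2) = 2 * int F.h" using F.hq by simp
  show ?thesis unfolding setA NN
  proof
    assume bent: "is_bent m m (\<lambda>p. p \<in> F.Sup m u s)"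
    have Sb: "\<bar>F.S u s a 1\<bar> = int F.h" if "a \<noteq> 0" for a
    proof -
      have "\<bar>walsh m m (\<lambda>p. p \<in> F.Sup m u s) a 1\<bar> = 2 ^ ((m + m) div 2)"
        using bent unfolding is_bent_def F.sub_UNIV by blast
      then show ?thesis unfolding F.walsh_anz[OF that] hh by (simp add: abs_mult)
    qed
    have sN: "s < F.N" using sle F.q_eq F.N_pos by simp
    obtain c0 where c0: "\<forall>y. y \<noteq> 0 \<longrightarrow> F.tr (c0 * y ^ F.w u) = F.tr y"
      using F.exists_c0[OF sN Sb] by blast
    have Nnz: "int F.N \<noteq> 0" using F.N_pos by simp
    have wint: "int (F.w u) = u mod int F.N" unfolding F.w_def using Nnz F.N_pos by simp
    have cw: "coprime (F.w u) F.N"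
    proof -
      have "coprime u (int F.N)" using cop NN by simp
      then have "coprime (u mod int F.N) (int F.N)" using Nnz by simp
      then have "coprime (int (F.w u)) (int F.N)" unfolding wint .
      then show ?thesis by simp
    qed
    obtain j where j: "j < m" "[F.w u * 2 ^ j = 1] (mod F.N)"
      using F.final_alg[of "F.w u" c0] m3 cw c0 by auto
    have N2: "F.N \<ge> 2" using F.N_ge2 m3 by simp
    have c1: "[2 ^ m = 1] (mod F.N)" unfolding cong_def using F.q_eq N2 by (simp add: mod_Suc)
    have e1: "[F.w u * 2 ^ m = F.w u * 1] (mod F.N)" by (rule cong_mult[OF cong_refl c1])
    have e2: "F.w u * 2 ^ m = (F.w u * 2 ^ j) * 2 ^ (m - j)"
      using j(1) by (simp add: power_add[symmetric] mult.assoc)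
    have e3: "[(F.w u * 2 ^ j) * 2 ^ (m - j) = 1 * 2 ^ (m - j)] (mod F.N)"
      by (rule cong_mult[OF j(2) cong_refl])
    have "[F.w u = 2 ^ (m - j)] (mod F.N)"
      using e1 e2 e3 by (metis cong_sym cong_trans mult_1 mult_1_right)
    then have "[int (F.w u) = int (2 ^ (m - j))] (mod int F.N)" by (simp only: cong_int_iff)
    then have "[int (F.w u) = 2 ^ (m - j)] (mod int F.N)" by simp
    moreover have "[u = int (F.w u)] (mod int F.N)" unfolding cong_def wint by simp
    ultimately have "[u = 2 ^ (m - j)] (mod int F.N)" using cong_trans by blast
    then show "\<exists>t::nat. [u = 2 ^ t] (mod int F.N)" by blast
  next
    assume "\<exists>t::nat. [u = 2 ^ t] (mod int F.N)"
    then obtain t :: nat where t: "[u = 2 ^ t] (mod int F.N)" by blast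
    show "is_bent m m (\<lambda>p. p \<in> F.Sup m u s)"
      unfolding is_bent_def
    proof (intro allI impI)
      fix a b :: 'a
      show "\<bar>walsh m m (\<lambda>p. p \<in> F.Sup m u s) a b\<bar> = 2 ^ ((m + m) div 2)"
      proof (cases "a = 0")
        case True then show ?thesis using F.walsh_a0 by simp
      next
        case False
        then show ?thesis unfolding F.walsh_anz[OF False] hh using F.S_if[OF False t] by (simp add: abs_mult)
      qed
    qed
  qed
qed

theorem corollary1:
  fixes \<alpha> :: "'a::{field,finite}" and r m s :: nat and u :: int
  assumes "odd r" and "m \<ge> 3" and "card (UNIV :: 'a set) = 2 ^ (r * m)"
    and "coprime u (2 ^ m - 1)" and "primitive_element \<alpha>"
    and "s \<le> 2 ^ (r * m) - 2"
  shows "is_bent (r * m) m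
           (\<lambda>p. p \<in> {(\<gamma> * y powi u, y) | \<gamma> y.
                        y \<in> subfield_pow2 m - {0} \<and> \<gamma> \<in> Delta \<alpha> s (r * m)})
         \<longleftrightarrow> (r = 1 \<and> (\<exists>t::nat. [u = 2 ^ t] (mod (2 ^ m - 1))))"
proof -
  have r1: "r \<ge> 1" using assms(1) by (cases r) auto
  have rm: "r * m \<ge> 1" using r1 assms(2) by (metis le_trans mult_le_mono one_le_numeral order.trans le_numeral_extra(4) mult_1)
  interpret F: ff \<alpha> "r * m" using assms(3,5) rm by unfold_locales auto
  have setA: "{(\<gamma> * y powi u, y) | \<gamma> y. y \<in> subfield_pow2 m - {0} \<and> \<gamma> \<in> Delta \<alpha> s (r * m)} = F.Sup m u s"
    unfolding F.Sup_def ..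
  show ?thesis
  proof
    assume bent: "is_bent (r * m) m
           (\<lambda>p. p \<in> {(\<gamma> * y powi u, y) | \<gamma> y.
                        y \<in> subfield_pow2 m - {0} \<and> \<gamma> \<in> Delta \<alpha> s (r * m)})"
    then have b00: "\<bar>walsh (r * m) m (\<lambda>p. p \<in> F.Sup m u s) 0 0\<bar> = 2 ^ ((r * m + m) div 2)"
      unfolding setA is_bent_def using F.zero_sub by blast
    then have "(2::int) ^ (r * m) = 2 ^ ((r * m + m) div 2)" using F.walsh00 by simp
    then have eqe: "r * m = (r * m + m) div 2" using power_inject_exp[of "2::int"] by simp
    have "r = 1"
    proof (rule ccontr)
      assume "r \<noteq> 1"
      then have "r \<ge> 2" using r1 by simp
      then have "r * m \<ge> 2 * m" by simp
      then show False using eqe assms(2) by presburger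
    qed
    moreover have "\<exists>t::nat. [u = 2 ^ t] (mod (2 ^ m - 1))"
      using case_r1[where \<alpha>=\<alpha> and m=m and s=s and u=u] bent assms \<open>r = 1\<close> by simp
    ultimately show "r = 1 \<and> (\<exists>t::nat. [u = 2 ^ t] (mod (2 ^ m - 1)))" by blast
  next
    assume H: "r = 1 \<and> (\<exists>t::nat. [u = 2 ^ t] (mod (2 ^ m - 1)))"
    then show "is_bent (r * m) m
           (\<lambda>p. p \<in> {(\<gamma> * y powi u, y) | \<gamma> y.
                        y \<in> subfield_pow2 m - {0} \<and> \<gamma> \<in> Delta \<alpha> s (r * m)})"
      using case_r1[where \<alpha>=\<alpha> and m=m and s=s and u=u] assms by simp
  qed
qed

end
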